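(* Consider the $T$-round online first-price auction problem and the AR-Prod policy described in the context, and assume $V_T=o(T)$. (i) If $V_T$ is known, restarting the Prod forecaster with translation $\mu_t=\max\{v_t-m_t,0\}$ every $\Delta_T$ rounds, with constant batch size $\Delta_T$ of order $\sqrt{T/V_T}$, achieves expected dynamic regret $\tilde{O}(\sqrt{TV_T})$ over all sequences in $\mathcal{V}$. (ii) If $V_T$ is unknown, the AR-Prod policy satisfies \[ \sup_{(v_t,m_t)_{t=1}^T\in\mathcal{V}}\mathbb{E}[\mathrm{DR}_T(\pi)]=\tilde{O}\left(\max\left\{\sqrt{TV_T},1\right\}\right). \]
   Context: Online first-price auction over $T$ rounds: at each round $t$ the learner observes a private value $v_t\in[0,1]$, submits a bid $b_t\in[0,1]$ (possibly randomized, depending only on past $(v_s,m_s)_{s<t}$ and $v_t$), then observes $m_t\in[0,1]$, the highest bid of the other bidders, and receives reward $r(b_t;v_t,m_t)$ with $r(b;v,m)\coloneqq(v-b)\mathbbm{1}(b\ge m)$. The expected dynamic regret is $\mathbb{E}[\mathrm{DR}_T(\pi)]\coloneqq\sum_{t=1}^T\max\{v_t-m_t,0\}-\sum_{t=1}^T\mathbb{E}[r(b_t;v_t,m_t)]$. For $V_T\ge0$, $\mathcal{V}\coloneqq\{(v_t,m_t)_{t=1}^T\in[0,1]^{2T}:\sum_{t=2}^T|m_t-m_{t-1}|\le V_T\}$. $\tilde{O}(\cdot)$ hides polylogarithmic factors in $T$. Prod forecaster: fix a precision $\epsilon$ and $N=1/\epsilon$ experts; expert $i\in\{1,\dots,N\}$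 bids $\min\{v_t,i\epsilon\}$ and has reward $r_{t,i}\coloneqq r(\min\{v_t,i\epsilon\};v_t,m_t)$. Starting from $p=(1/N,\dots,1/N)$, at round $t$ the bid $\min\{v_t,i\epsilon\}$ is chosen with probability $p_{t,i}$, and after observing $m_t$ the weights are updated as $p_{t+1,i}=\frac{(1+\eta(r_{t,i}-\mu_t))p_{t,i}}{\sum_{k=1}^N(1+\eta(r_{t,k}-\mu_t))p_{t,k}}$ with $\mu_t=\max\{v_t-m_t,0\}$. AR-Prod policy: set $\eta=\frac12$, $\epsilon=\frac1T$, $c=\frac1T$. Time is split into consecutive batches $\mathcal{T}_1,\mathcal{T}_2,\dots$; at the first round of each batch the Prod forecaster is restarted (weights reset to uniform). For the current batch $j$, let $\Delta_{T,j}$ be its current length and $V_{T,j}$ the temporal variation $\sum|m_t-m_{t-1}|$ of the opponents' highest bids over consecutive rounds within batch $j$ observed so far, with $V_{T,i}$ for $i<j$ the variations of completed batches. After each round of batch $j$ the quantities are updated, and batch $j$ continues as long as $\Delta_{T,j}<\sqrt{T/(\sum_{i=1}^jV_{T,i}+c)}$; otherwise a new batch begins at the next round. *)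

theory Defs
  imports Complex_Main "HOL-Library.Landau_Symbols"
begin

definition reward :: "real \<Rightarrow> real \<Rightarrow> real \<Rightarrow> real" where
  "reward b v m = (if b \<ge> m then v - b else 0)"

definition expert_reward :: "real \<Rightarrow> (nat \<Rightarrow> real) \<Rightarrow> (nat \<Rightarrow> real) \<Rightarrow> nat \<Rightarrow> nat \<Rightarrow> real" where
  "expert_reward eps v m t i = reward (min (v t) (real i * eps)) (v t) (m t)"

definition mu :: "(nat \<Rightarrow> real) \<Rightarrow> (nat \<Rightarrow> real) \<Rightarrow> nat \<Rightarrow> real" where
  "mu v m t = max (v t - m t) 0"

(* Rounds are numbered 1,2,...; 
   prod_w N eps eta R v m n i is the probability p_{n+1,i} of expert i at round n+1.
   R t holds iff the forecaster is restarted (weights reset to uniform) at the first round t of a batch. *)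
fun prod_w :: "nat \<Rightarrow> real \<Rightarrow> real \<Rightarrow> (nat \<Rightarrow> bool) \<Rightarrow> (nat \<Rightarrow> real) \<Rightarrow> (nat \<Rightarrow> real) \<Rightarrow> nat \<Rightarrow> nat \<Rightarrow> real" where
  "prod_w N eps eta R v m 0 i = 1 / real N"
| "prod_w N eps eta R v m (Suc n) i =
     (if R (n + 2) then 1 / real N
      else (let f = (\<lambda>k. (1 + eta * (expert_reward eps v m (n + 1) k - mu v m (n + 1)))
                           * prod_w N eps eta R v m n k)
            in f i / (\<Sum>k\<in>{1..N}. f k)))"

definition prod_exp_reward :: "nat \<Rightarrow> real \<Rightarrow> real \<Rightarrow> (nat \<Rightarrow> bool) \<Rightarrow> (nat \<Rightarrow> real) \<Rightarrow> (nat \<Rightarrow> real) \<Rightarrow> nat \<Rightarrow> real" where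
  "prod_exp_reward N eps eta R v m t =
     (\<Sum>i\<in>{1..N}. prod_w N eps eta R v m (t - 1) i * expert_reward eps v m t i)"

definition prod_regret :: "nat \<Rightarrow> nat \<Rightarrow> real \<Rightarrow> real \<Rightarrow> (nat \<Rightarrow> bool) \<Rightarrow> (nat \<Rightarrow> real) \<Rightarrow> (nat \<Rightarrow> real) \<Rightarrow> real" where
  "prod_regret T N eps eta R v m =
     (\<Sum>t\<in>{1..T}. mu v m t - prod_exp_reward N eps eta R v m t)"

definition seqs :: "nat \<Rightarrow> real \<Rightarrow> ((nat \<Rightarrow> real) \<times> (nat \<Rightarrow> real)) set" where
  "seqs T VT = {(v, m). (\<forall>t\<in>{1..T}. 0 \<le> v t \<and> v t \<le> 1 \<and> 0 \<le> m t \<and> m t \<le> 1)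
                       \<and> (\<Sum>t\<in>{2..T}. \<bar>m t - m (t - 1)\<bar>) \<le> VT}"

definition fixed_restart :: "nat \<Rightarrow> nat \<Rightarrow> bool" where
  "fixed_restart Delta t = ((t - 1) mod Delta = 0)"

(* AR-Prod batch state. ar_state T c m n = (s, W) describes round n+1:
   s = first round of the current batch, W = sum of variations V_{T,i} of completed batches.
   After round t = n+1: Delta_{T,j} = t - s + 1, V_{T,j} = sum_{u=s+1..t} |m u - m (u-1)|;
   the batch continues iff Delta_{T,j} < sqrt(T / (W + V_{T,j} + c)). *)
fun ar_state :: "nat \<Rightarrow> real \<Rightarrow> (nat \<Rightarrow> real) \<Rightarrow> nat \<Rightarrow> nat \<times> real" where
  "ar_state T c m 0 = (1, 0)"
| "ar_state T c m (Suc n) =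
     (let (s, W) = ar_state T c m n;
          t = n + 1;
          Vc = (\<Sum>u\<in>{s<..t}. \<bar>m u - m (u - 1)\<bar>);
          D = real (t - s + 1)
      in if D < sqrt (real T / (W + Vc + c)) then (s, W) else (t + 1, W + Vc))"

definition ar_restart :: "nat \<Rightarrow> real \<Rightarrow> (nat \<Rightarrow> real) \<Rightarrow> nat \<Rightarrow> bool" where
  "ar_restart T c m t = (fst (ar_state T c m (t - 1)) = t)"

definition fixed_regret :: "nat \<Rightarrow> nat \<Rightarrow> (nat \<Rightarrow> real) \<Rightarrow> (nat \<Rightarrow> real) \<Rightarrow> real" where
  "fixed_regret T Delta v m = prod_regret T T (1 / real T) (1/2) (fixed_restart Delta) v m"

definition arprod_regret :: "nat \<Rightarrow> (nat \<Rightarrow> real) \<Rightarrow> (nat \<Rightarrow> real) \<Rightarrow> real" where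
  "arprod_regret T v m = prod_regret T T (1 / real T) (1/2) (ar_restart T (1 / real T) m) v m"

definition soft_bigO :: "(nat \<Rightarrow> real) \<Rightarrow> (nat \<Rightarrow> real) \<Rightarrow> bool" where
  "soft_bigO f g = (\<exists>C k. eventually (\<lambda>T. f T \<le> C * (ln (real T)) ^ k * g T) at_top)"

end

theory Submission
  imports Defs
begin


lemma er_bounds: "0 \<le> expert_reward eps v m t i" "expert_reward eps v m t i \<le> mu v m t"
  unfolding expert_reward_def reward_def mu_def by auto

lemma mu_nonneg: "0 \<le> mu v m t" unfolding mu_def by auto

lemma mu_le1: "v t \<le> 1 \<Longrightarrow> 0 \<le> m t \<Longrightarrow> mu v m t \<le> 1" unfolding mu_def by auto

definition FF :: "real \<Rightarrow> (nat\<Rightarrow>real) \<Rightarrow> (nat\<Rightarrow>real) \<Rightarrow> nat \<Rightarrow> nat \<Rightarrow> real" where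
  "FF eps v m s i = 1 + 1/2 * (expert_reward eps v m s i - mu v m s)"

definition WW :: "real \<Rightarrow> (nat\<Rightarrow>real) \<Rightarrow> (nat\<Rightarrow>real) \<Rightarrow> nat \<Rightarrow> nat \<Rightarrow> nat \<Rightarrow> real" where
  "WW eps v m a t i = (\<Prod>s\<in>{a..<t}. FF eps v m s i)"

definition SS :: "nat \<Rightarrow> real \<Rightarrow> (nat\<Rightarrow>real) \<Rightarrow> (nat\<Rightarrow>real) \<Rightarrow> nat \<Rightarrow> nat \<Rightarrow> real" where
  "SS N eps v m a t = (\<Sum>k\<in>{1..N}. WW eps v m a t k)"

lemma FF_bounds: assumes "mu v m s \<le> 1"
  shows "1/2 \<le> FF eps v m s i" "FF eps v m s i \<le> 1"
proof -
  have "0 \<le> expert_reward eps v m s i" "expert_reward eps v m s i \<le> mu v m s"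
    by (rule er_bounds)+
  then show "1/2 \<le> FF eps v m s i" using assms unfolding FF_def right_diff_distrib by linarith
  show "FF eps v m s i \<le> 1" using \<open>expert_reward eps v m s i \<le> mu v m s\<close> unfolding FF_def right_diff_distrib by linarith
qed

lemma WW_pos: assumes "\<And>s. a \<le> s \<Longrightarrow> s < t \<Longrightarrow> mu v m s \<le> 1"
  shows "0 < WW eps v m a t i"
  unfolding WW_def
proof (rule prod_pos)
  fix s assume "s \<in> {a..<t}"
  then show "0 < FF eps v m s i" using FF_bounds(1)[OF assms, of s eps i] by auto
qed

lemma SS_pos: assumes "\<And>s. a \<le> s \<Longrightarrow> s < t \<Longrightarrow> mu v m s \<le> 1" "N \<ge> 1"
  shows "0 < SS N eps v m a t"
  unfolding SS_def
proof (rule sum_pos)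
  show "finite {1..N}" by simp
  show "{1..N} \<noteq> {}" using assms(2) by simp
  fix k show "0 < WW eps v m a t k" using WW_pos[OF assms(1)] by blast
qed

lemma WW_Suc: "a \<le> t \<Longrightarrow> WW eps v m a (Suc t) i = WW eps v m a t i * FF eps v m t i"
  unfolding WW_def by (simp add: prod.op_ivl_Suc)

lemma WW_start: "WW eps v m a a i = 1" unfolding WW_def by simp

lemma SS_start: "SS N eps v m a a = real N" unfolding SS_def by (simp add: WW_start)

lemma repr:
  assumes N: "N \<ge> 1" and a: "1 \<le> a" and Ra: "R a"
    and noR: "\<And>t. a < t \<Longrightarrow> t \<le> b \<Longrightarrow> \<not> R t"
    and mub: "\<And>s. a \<le> s \<Longrightarrow> s \<le> b \<Longrightarrow> mu v m s \<le> 1"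
  shows "a + k \<le> b \<Longrightarrow> prod_w N eps (1/2) R v m (a + k - 1) i
            = WW eps v m a (a + k) i / SS N eps v m a (a + k)"
proof (induction k arbitrary: i)
  case 0
  have "prod_w N eps (1/2) R v m (a - 1) i = 1 / real N"
  proof (cases a)
    case 0 then show ?thesis using a by simp
  next
    case (Suc a')
    show ?thesis
    proof (cases a')
      case 0 then show ?thesis using Suc by simp
    next
      case (Suc a'') then have "a - 1 = Suc a''" "a'' + 2 = a" using \<open>a = Suc a'\<close> by auto
      then show ?thesis using Ra by simp
    qed
  qed
  then show ?case by (simp add: WW_start SS_start)
next
  case (Suc k)
  define t where "t = a + k"
  have tb: "t < b" using Suc.prems t_def by simp
  have pos: "\<And>s. a \<le> s \<Longrightarrow> s < Suc t \<Longrightarrow> mu v m s \<le> 1" using mub tb by auto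
  have pos0: "\<And>s. a \<le> s \<Longrightarrow> s < t \<Longrightarrow> mu v m s \<le> 1" using pos by auto
  have St: "0 < SS N eps v m a t" using SS_pos[OF pos0 N] by blast
  have nR: "\<not> R (t + 1)" using noR[of "t+1"] tb t_def by simp
  have IH: "\<And>i. prod_w N eps (1/2) R v m (t - 1) i = WW eps v m a t i / SS N eps v m a t"
    using Suc t_def by simp
  define t' where "t' = t - 1"
  have tt: "t = Suc t'" using t_def a t'_def by simp
  have eq: "a + Suc k - 1 = Suc t'" using t_def tt by simp
  have IH': "\<And>i. prod_w N eps (1/2) R v m t' i = WW eps v m a t i / SS N eps v m a t"
    using IH tt by simp
  define f where "f = (\<lambda>k. (1 + 1/2 * (expert_reward eps v m t k - mu v m t))
                           * prod_w N eps (1/2) R v m t' k)"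
  have f_eq: "f k = WW eps v m a (Suc t) k / SS N eps v m a t" for k
  proof -
    have ws: "WW eps v m a (Suc t) k = WW eps v m a t k * FF eps v m t k"
      using WW_Suc[of a t] t_def by simp
    show ?thesis unfolding f_def IH' ws FF_def by (simp add: mult.commute)
  qed
  have nR': "\<not> R (t' + 2)" using nR tt by simp
  have "prod_w N eps (1/2) R v m (a + Suc k - 1) i = f i / (\<Sum>k\<in>{1..N}. f k)"
    unfolding eq prod_w.simps(2) using nR' by (simp add: f_def Let_def tt)
  also have "\<dots> = WW eps v m a (Suc t) i / SS N eps v m a (Suc t)"
    unfolding f_eq SS_def using St[unfolded SS_def] by (simp add: sum_divide_distrib[symmetric])
  finally show ?case using t_def by simp
qed

lemma d_expr:
  assumes N: "N \<ge> 1" and a: "1 \<le> a" and Ra: "R a"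
    and noR: "\<And>t. a < t \<Longrightarrow> t \<le> b \<Longrightarrow> \<not> R t"
    and mub: "\<And>s. a \<le> s \<Longrightarrow> s \<le> b \<Longrightarrow> mu v m s \<le> 1"
    and t: "a \<le> t" "t \<le> b"
  shows "mu v m t - prod_exp_reward N eps (1/2) R v m t
         = 2 * (1 - SS N eps v m a (Suc t) / SS N eps v m a t)"
proof -
  have pos0: "\<And>s. a \<le> s \<Longrightarrow> s < t \<Longrightarrow> mu v m s \<le> 1" using mub t by auto
  have St: "0 < SS N eps v m a t" using SS_pos[OF pos0 N] by blast
  have rp: "prod_w N eps (1/2) R v m (t - 1) i = WW eps v m a t i / SS N eps v m a t" for i
    using repr[where N=N and a=a and R=R and b=b and v=v and m=m and k="t-a" and eps=eps and i=i, OF N a Ra noR mub] t by simp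
  have E: "prod_exp_reward N eps (1/2) R v m t
        = (\<Sum>i\<in>{1..N}. WW eps v m a t i * expert_reward eps v m t i) / SS N eps v m a t"
    unfolding prod_exp_reward_def rp by (simp add: sum_divide_distrib)
  have S1: "SS N eps v m a (Suc t) = SS N eps v m a t
      + 1/2 * (\<Sum>i\<in>{1..N}. WW eps v m a t i * expert_reward eps v m t i)
      - 1/2 * mu v m t * SS N eps v m a t"
  proof -
    have "SS N eps v m a (Suc t) = (\<Sum>k\<in>{1..N}. WW eps v m a t k + 1/2 * (WW eps v m a t k * expert_reward eps v m t k) - 1/2 * mu v m t * WW eps v m a t k)"
      unfolding SS_def WW_Suc[OF t(1)] FF_def by (intro sum.cong) (auto simp: algebra_simps)
    also have "\<dots> = SS N eps v m a t
      + 1/2 * (\<Sum>i\<in>{1..N}. WW eps v m a t i * expert_reward eps v m t i)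
      - 1/2 * mu v m t * SS N eps v m a t"
      unfolding SS_def by (simp add: sum.distrib sum_subtractf sum_distrib_left)
    finally show ?thesis .
  qed
  define X where "X = (\<Sum>i\<in>{1..N}. WW eps v m a t i * expert_reward eps v m t i)"
  define S where "S = SS N eps v m a t"
  have "(S + 1/2 * X - 1/2 * mu v m t * S) / S = 1 + 1/2 * (X / S) - 1/2 * mu v m t"
    using St unfolding S_def by (simp add: diff_divide_distrib add_divide_distrib)
  then show ?thesis unfolding E S1 X_def[symmetric] S_def[symmetric] by simp
qed

lemma prod_batch:
  assumes N: "N \<ge> 1" and a: "1 \<le> a" and ab: "a \<le> b" and Ra: "R a"
    and noR: "\<And>t. a < t \<Longrightarrow> t \<le> b \<Longrightarrow> \<not> R t"
    and mub: "\<And>s. a \<le> s \<Longrightarrow> s \<le> b \<Longrightarrow> mu v m s \<le> 1"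
    and i: "i \<in> {1..N}"
  shows "(\<Sum>t\<in>{a..b}. mu v m t - prod_exp_reward N eps (1/2) R v m t)
         \<le> 2 * ln (real N) + 2 * (\<Sum>t\<in>{a..b}. mu v m t - expert_reward eps v m t i)"
proof -
  let ?S = "SS N eps v m a"
  have Spos: "0 < ?S t" if "t \<le> Suc b" for t
    using SS_pos[of a t v m N eps] mub N that by auto
  have step: "mu v m t - prod_exp_reward N eps (1/2) R v m t \<le> 2 * (ln (?S t) - ln (?S (Suc t)))"
    if "t \<in> {a..b}" for t
  proof -
    have p1: "0 < ?S t" "0 < ?S (Suc t)" using Spos that by auto
    have "ln (?S (Suc t) / ?S t) \<le> ?S (Suc t) / ?S t - 1"
      using p1 by (intro ln_le_minus_one) simp
    then have "1 - ?S (Suc t) / ?S t \<le> ln (?S t) - ln (?S (Suc t))"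
      using p1 by (simp add: ln_divide_pos)
    then show ?thesis using d_expr[where N=N and a=a and R=R and b=b and v=v and m=m and t=t and eps=eps, OF N a Ra noR mub] that by simp
  qed
  have "(\<Sum>t\<in>{a..b}. mu v m t - prod_exp_reward N eps (1/2) R v m t)
        \<le> (\<Sum>t\<in>{a..b}. 2 * (ln (?S t) - ln (?S (Suc t))))"
    by (rule sum_mono) (rule step)
  also have "\<dots> = 2 * (ln (?S a) - ln (?S (Suc b)))"
  proof -
    have "(\<Sum>t\<in>{a..b}. ln (?S (Suc t)) - ln (?S t)) = ln (?S (Suc b)) - ln (?S a)"
      using ab by (intro sum_Suc_diff) simp
    then show ?thesis by (simp add: sum_distrib_left[symmetric] sum_subtractf)
  qed
  also have "\<dots> \<le> 2 * ln (real N) + 2 * (\<Sum>t\<in>{a..b}. mu v m t - expert_reward eps v m t i)"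
  proof -
    have Fp: "\<And>s. s \<in> {a..<Suc b} \<Longrightarrow> 0 < FF eps v m s i"
    proof -
      fix s assume "s \<in> {a..<Suc b}"
      then have "mu v m s \<le> 1" using mub by auto
      then have "1/2 \<le> FF eps v m s i" by (rule FF_bounds)
      then show "0 < FF eps v m s i" by simp
    qed
    have Wp: "0 < WW eps v m a (Suc b) i" using WW_pos[of a "Suc b" v m eps i] mub by auto
    have "WW eps v m a (Suc b) i \<le> ?S (Suc b)"
      unfolding SS_def
      by (rule member_le_sum) (use i WW_pos[of a "Suc b" v m eps] mub in \<open>auto intro: less_imp_le\<close>)
    then have "ln (WW eps v m a (Suc b) i) \<le> ln (?S (Suc b))" using Wp by simp
    moreover have "ln (WW eps v m a (Suc b) i) = (\<Sum>s\<in>{a..<Suc b}. ln (FF eps v m s i))"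
      unfolding WW_def using Fp by (intro ln_prod) (auto, metis less_irrefl)
    moreover have "ln (FF eps v m s i) \<ge> expert_reward eps v m s i - mu v m s"
      if "s \<in> {a..<Suc b}" for s
    proof -
      have f1: "1/2 \<le> FF eps v m s i" "FF eps v m s i \<le> 1" using FF_bounds mub that by auto
      have "ln (1 / FF eps v m s i) \<le> 1 / FF eps v m s i - 1" using f1 by (intro ln_le_minus_one) simp
      then have "ln (FF eps v m s i) \<ge> 1 - 1 / FF eps v m s i" using f1 by (simp add: ln_div)
      moreover have "1 - 1 / FF eps v m s i \<ge> 2 * (FF eps v m s i - 1)"
      proof -
        define x where "x = FF eps v m s i"
        have x: "1/2 \<le> x" "x \<le> 1" using f1 x_def by auto
        have "1/x \<le> 2" using x by (simp add: divide_le_eq)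
        have "1 - 1/x - 2*(x - 1) = (1 - x) * (2 - 1/x)" using x by (simp add: field_simps)
        moreover have "(1 - x) * (2 - 1/x) \<ge> 0" using x \<open>1/x \<le> 2\<close> by simp
        ultimately show ?thesis unfolding x_def[symmetric] by linarith
      qed
      ultimately show ?thesis unfolding FF_def by simp
    qed
    then have "(\<Sum>s\<in>{a..<Suc b}. ln (FF eps v m s i)) \<ge> (\<Sum>s\<in>{a..<Suc b}. expert_reward eps v m s i - mu v m s)"
      by (intro sum_mono) auto
    moreover have "{a..<Suc b} = {a..b}" by auto
    moreover have "?S a = real N" by (rule SS_start)
    ultimately show ?thesis by (simp add: sum_subtractf)
  qed
  finally show ?thesis .
qed



definition Vseg :: "(nat \<Rightarrow> real) \<Rightarrow> nat \<Rightarrow> nat \<Rightarrow> real" where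
  "Vseg m a b = (\<Sum>u\<in>{a<..b}. \<bar>m u - m (u - 1)\<bar>)"

lemma Vseg_nonneg: "0 \<le> Vseg m a b" unfolding Vseg_def by (rule sum_nonneg) simp

lemma Vseg_mono: "a \<le> a' \<Longrightarrow> b' \<le> b \<Longrightarrow> Vseg m a' b' \<le> Vseg m a b"
  unfolding Vseg_def by (rule sum_mono2) auto

lemma Vseg_add: assumes "a \<le> s" "s \<le> Suc b" "1 \<le> s"
  shows "Vseg m a (s - 1) + Vseg m s b \<le> Vseg m a b"
proof -
  have "Vseg m a (s - 1) + Vseg m s b = (\<Sum>u\<in>{a<..s-1} \<union> {s<..b}. \<bar>m u - m (u - 1)\<bar>)"
    unfolding Vseg_def by (rule sum.union_disjoint[symmetric]) auto
  also have "\<dots> \<le> Vseg m a b" unfolding Vseg_def using assms by (intro sum_mono2) auto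
  finally show ?thesis .
qed

lemma Vseg_empty: "Vseg m s (s - 1) = 0" "Vseg m s s = 0" unfolding Vseg_def by auto

lemma Vseg_Suc: "a \<le> b \<Longrightarrow> Vseg m a (Suc b) = Vseg m a b + \<bar>m (Suc b) - m b\<bar>"
proof -
  assume "a \<le> b"
  then have "{a<..Suc b} = insert (Suc b) {a<..b}" by auto
  then show ?thesis unfolding Vseg_def by (simp add: add.commute)
qed

lemma Vseg_diff: "t \<le> u \<Longrightarrow> \<bar>m u - m t\<bar> \<le> Vseg m t u"
proof (induction u)
  case 0 then show ?case by (simp add: Vseg_def)
next
  case (Suc u)
  show ?case
  proof (cases "t = Suc u")
    case True then show ?thesis by (simp add: Vseg_nonneg)
  next
    case False
    then have tu: "t \<le> u" using Suc.prems by simp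
    have "\<bar>m (Suc u) - m t\<bar> \<le> \<bar>m u - m t\<bar> + \<bar>m (Suc u) - m u\<bar>" by linarith
    also have "\<dots> \<le> Vseg m t u + \<bar>m (Suc u) - m u\<bar>" using Suc.IH[OF tu] by simp
    also have "\<dots> = Vseg m t (Suc u)" using Vseg_Suc[OF tu] by simp
    finally show ?thesis .
  qed
qed

lemma round_bound:
  assumes "mt \<le> M" "M \<le> x" "x \<le> M + d" "0 \<le> d"
  shows "max (v - mt) 0 - reward (min v x) v mt \<le> M - mt + d"
  using assms unfolding reward_def by auto

lemma comparator:
  assumes T: "T \<ge> 1" and s: "1 \<le> s" "s \<le> b" "b \<le> T"
    and bd: "\<And>t. t \<in> {1..T} \<Longrightarrow> 0 \<le> v t \<and> v t \<le> 1 \<and> 0 \<le> m t \<and> m t \<le> 1"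
  shows "\<exists>i\<in>{1..T}. (\<Sum>t\<in>{s..b}. mu v m t - expert_reward (1 / real T) v m t i)
           \<le> real (b - s) * (Vseg m s (b - 1) + 1 / real T) + 1"
proof (cases "b = s")
  case True
  have "mu v m s - expert_reward (1 / real T) v m s 1 \<le> 1"
    using er_bounds[of "1 / real T" v m s 1] mu_le1[of v s m] bd[of s] s by auto
  then show ?thesis using True T by (intro bexI[of _ 1]) auto
next
  case False
  define e where "e = b - 1"
  have se: "s \<le> e" "b = Suc e" using False s e_def by auto
  define M where "M = Max (m ` {s..e})"
  have Min: "M \<in> m ` {s..e}" unfolding M_def using se by (intro Max_in) auto
  have Mge: "m t \<le> M" if "t \<in> {s..e}" for t unfolding M_def using that by (intro Max_ge) auto
  obtain u where u: "u \<in> {s..e}" "M = m u" using Min by auto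
  have M01: "0 \<le> M" "M \<le> 1" using bd[of u] u se s by auto
  define i where "i = max 1 (nat \<lceil>M * real T\<rceil>)"
  have Tpos: "real T > 0" using T by simp
  have ceil_le: "\<lceil>M * real T\<rceil> \<le> int T"
  proof -
    have "M * real T \<le> real T" using M01 Tpos by (simp add: mult_le_cancel_right1)
    then show ?thesis by (simp add: ceiling_le_iff)
  qed
  have "nat \<lceil>M * real T\<rceil> \<le> T" using ceil_le by (simp add: nat_le_iff)
  then have iT: "i \<in> {1..T}" unfolding i_def using T by simp
  have i_ge: "real i \<ge> M * real T"
    using real_nat_ceiling_ge[of "M * real T"] unfolding i_def by simp
  have i_le: "real i \<le> M * real T + 1"
  proof -
    have y0: "0 \<le> M * real T" using M01 Tpos by simp
    have c0: "0 \<le> \<lceil>M * real T\<rceil>" using y0 by simp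
    have "real (nat \<lceil>M * real T\<rceil>) = of_int \<lceil>M * real T\<rceil>" using c0 by simp
    also have "\<dots> < M * real T + 1" using ceiling_correct[of "M * real T"] by linarith
    finally show ?thesis unfolding i_def using y0 by simp
  qed
  have x1: "M \<le> real i * (1 / real T)" using i_ge Tpos by (simp add: field_simps)
  have x2: "real i * (1 / real T) \<le> M + 1 / real T" using i_le Tpos by (simp add: field_simps)
  have per: "mu v m t - expert_reward (1 / real T) v m t i \<le> Vseg m s e + 1 / real T"
    if t: "t \<in> {s..e}" for t
  proof -
    have "mu v m t - expert_reward (1 / real T) v m t i \<le> M - m t + 1 / real T"
      unfolding mu_def expert_reward_def
      by (rule round_bound) (use Mge[OF t] x1 x2 Tpos in auto)
    moreover have "M - m t \<le> Vseg m s e"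
    proof (cases "t \<le> u")
      case True
      have "\<bar>m u - m t\<bar> \<le> Vseg m t u" by (rule Vseg_diff[OF True])
      also have "\<dots> \<le> Vseg m s e" using t u by (intro Vseg_mono) auto
      finally show ?thesis using u by linarith
    next
      case False
      have "\<bar>m t - m u\<bar> \<le> Vseg m u t" using False by (intro Vseg_diff) auto
      also have "\<dots> \<le> Vseg m s e" using t u by (intro Vseg_mono) auto
      finally show ?thesis using u by linarith
    qed
    ultimately show ?thesis by linarith
  qed
  have last: "mu v m b - expert_reward (1 / real T) v m b i \<le> 1"
    using er_bounds[of "1 / real T" v m b i] mu_le1[of v b m] bd[of b] s by auto
  have "(\<Sum>t\<in>{s..b}. mu v m t - expert_reward (1 / real T) v m t i)
      = (\<Sum>t\<in>{s..e}. mu v m t - expert_reward (1 / real T) v m t i)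
        + (mu v m b - expert_reward (1 / real T) v m b i)"
    using se by (simp add: sum.cl_ivl_Suc)
  also have "\<dots> \<le> real (card {s..e}) * (Vseg m s e + 1 / real T) + 1"
  proof (rule add_mono)
    show "(\<Sum>t\<in>{s..e}. mu v m t - expert_reward (1 / real T) v m t i) \<le> real (card {s..e}) * (Vseg m s e + 1 / real T)"
      by (rule sum_bounded_above) (rule per)
  qed (rule last)
  also have "real (card {s..e}) = real (b - s)" using se by simp
  finally show ?thesis using iT e_def by blast
qed



lemma lastR:
  assumes "R (1::nat)" "1 \<le> b"
  obtains s where "1 \<le> s" "s \<le> b" "R s" "\<And>t. s < t \<Longrightarrow> t \<le> b \<Longrightarrow> \<not> R t"
proof -
  define s where "s = Max {t\<in>{1..b}. R t}"
  have ne: "{t\<in>{1..b}. R t} \<noteq> {}" using assms by auto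
  have "s \<in> {t\<in>{1..b}. R t}" unfolding s_def using ne by (intro Max_in) auto
  moreover have "\<And>t. s < t \<Longrightarrow> t \<le> b \<Longrightarrow> \<not> R t"
  proof
    fix t assume "s < t" "t \<le> b" "R t"
    then have "t \<le> s" unfolding s_def by (intro Max_ge; auto)
    then show False using \<open>s < t\<close> by simp
  qed
  ultimately show ?thesis using that by auto
qed

lemma sum_split1:
  assumes "1 \<le> s" "s \<le> Suc b"
  shows "sum (d :: nat \<Rightarrow> real) {1..b} = sum d {1..s - 1} + sum d {s..b}"
proof -
  have "{1..b} = {1..s - 1} \<union> {s..b}" using assms by auto
  then show ?thesis by (simp add: sum.union_disjoint[symmetric] ivl_disj_int)
qed

lemma assemble:
  fixes d :: "nat \<Rightarrow> real" and G :: "nat \<Rightarrow> real" and R :: "nat \<Rightarrow> bool"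
  assumes T: "1 \<le> T" and R1: "R 1"
    and mid: "\<And>s b. 1 \<le> s \<Longrightarrow> s \<le> b \<Longrightarrow> b < T \<Longrightarrow> R s \<Longrightarrow> (\<And>t. s < t \<Longrightarrow> t \<le> b \<Longrightarrow> \<not> R t)
               \<Longrightarrow> R (Suc b) \<Longrightarrow> (\<Sum>t\<in>{s..b}. d t) \<le> G b - G (s - 1)"
    and fin: "\<And>s. 1 \<le> s \<Longrightarrow> s \<le> T \<Longrightarrow> R s \<Longrightarrow> (\<And>t. s < t \<Longrightarrow> t \<le> T \<Longrightarrow> \<not> R t)
               \<Longrightarrow> (\<Sum>t\<in>{s..T}. d t) \<le> G T - G (s - 1) + K"
  shows "(\<Sum>t\<in>{1..T}. d t) \<le> G T - G 0 + K"
proof -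
  have main: "b < T \<Longrightarrow> (b = 0 \<or> R (Suc b)) \<Longrightarrow> (\<Sum>t\<in>{1..b}. d t) \<le> G b - G 0" for b
  proof (induction b rule: less_induct)
    case (less b)
    show ?case
    proof (cases "b = 0")
      case True then show ?thesis by simp
    next
      case False
      then have Rb: "R (Suc b)" using less.prems by simp
      obtain s where s: "1 \<le> s" "s \<le> b" "R s" "\<And>t. s < t \<Longrightarrow> t \<le> b \<Longrightarrow> \<not> R t"
        using lastR[of R b] R1 False by auto
      have "(\<Sum>t\<in>{1..s-1}. d t) \<le> G (s - 1) - G 0"
        using less.IH[of "s - 1"] s less.prems by (cases "s = 1") auto
      moreover have "(\<Sum>t\<in>{s..b}. d t) \<le> G b - G (s - 1)"
        using mid[OF s(1,2) _ s(3)] s(4) less.prems Rb by auto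
      ultimately show ?thesis using sum_split1[OF s(1), of b d] s by simp
    qed
  qed
  obtain s where s: "1 \<le> s" "s \<le> T" "R s" "\<And>t. s < t \<Longrightarrow> t \<le> T \<Longrightarrow> \<not> R t"
    using lastR[of R T] R1 T by auto
  have "(\<Sum>t\<in>{1..s-1}. d t) \<le> G (s - 1) - G 0"
    using main[of "s - 1"] s by (cases "s = 1") auto
  moreover have "(\<Sum>t\<in>{s..T}. d t) \<le> G T - G (s - 1) + K" using fin[OF s(1,2,3)] s(4) by auto
  ultimately show ?thesis using sum_split1[OF s(1), of T d] s by simp
qed



definition dd :: "nat \<Rightarrow> (nat \<Rightarrow> bool) \<Rightarrow> (nat \<Rightarrow> real) \<Rightarrow> (nat \<Rightarrow> real) \<Rightarrow> nat \<Rightarrow> real" where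
  "dd T R v m t = mu v m t - prod_exp_reward T (1 / real T) (1/2) R v m t"

lemma batch_cost:
  assumes T: "T \<ge> 1" and s: "1 \<le> s" "s \<le> b" "b \<le> T" and Rs: "R s"
    and noR: "\<And>t. s < t \<Longrightarrow> t \<le> b \<Longrightarrow> \<not> R t"
    and bd: "\<And>t. t \<in> {1..T} \<Longrightarrow> 0 \<le> v t \<and> v t \<le> 1 \<and> 0 \<le> m t \<and> m t \<le> 1"
  shows "(\<Sum>t\<in>{s..b}. dd T R v m t)
         \<le> 2 * ln (real T) + 2 + 2 * (real (b - s) * (Vseg m s (b - 1) + 1 / real T))"
proof -
  have "\<exists>i\<in>{1..T}. (\<Sum>t\<in>{s..b}. mu v m t - expert_reward (1 / real T) v m t i)
           \<le> real (b - s) * (Vseg m s (b - 1) + 1 / real T) + 1"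
    by (rule comparator[OF T s bd])
  then obtain i where i: "i \<in> {1..T}" and ci: "(\<Sum>t\<in>{s..b}. mu v m t - expert_reward (1 / real T) v m t i)
           \<le> real (b - s) * (Vseg m s (b - 1) + 1 / real T) + 1" ..
  have mub: "mu v m u \<le> 1" if u: "s \<le> u" "u \<le> b" for u
  proof -
    have "u \<in> {1..T}" using u s by simp
    then have "v u \<le> 1" "0 \<le> m u" using bd by auto
    then show ?thesis by (rule mu_le1)
  qed
  have "(\<Sum>t\<in>{s..b}. dd T R v m t) \<le> 2 * ln (real T) + 2 * (\<Sum>t\<in>{s..b}. mu v m t - expert_reward (1 / real T) v m t i)"
    unfolding dd_def
    by (rule prod_batch[where N=T and a=s and b=b and R=R and v=v and m=m and i=i and eps="1/real T", OF T s(1) s(2) Rs noR mub i])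
  then show ?thesis using ci by linarith
qed

lemma fixed_batch_len:
  assumes D: "Delta \<ge> 1" and s: "1 \<le> s" "s \<le> b" and Rs: "fixed_restart Delta s"
    and noR: "\<And>t. s < t \<Longrightarrow> t \<le> b \<Longrightarrow> \<not> fixed_restart Delta t"
  shows "b - s < Delta" "fixed_restart Delta (Suc b) \<Longrightarrow> Delta \<le> b - s + 1"
proof -
  have dv: "Delta dvd (s - 1)" using Rs unfolding fixed_restart_def by auto
  show "b - s < Delta"
  proof (rule ccontr)
    assume "\<not> b - s < Delta"
    then have "s < s + Delta" "s + Delta \<le> b" using D by auto
    moreover have "fixed_restart Delta (s + Delta)"
    proof -
      have "s + Delta - 1 = (s - 1) + Delta" using s by simp
      moreover have "(s - 1) mod Delta = 0" using dv by simp
      ultimately show ?thesis unfolding fixed_restart_def by simp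
    qed
    ultimately show False using noR by blast
  qed
  assume "fixed_restart Delta (Suc b)"
  then have "Delta dvd b" unfolding fixed_restart_def by auto
  then have "Delta dvd b - (s - 1)" using dv by (rule dvd_diff_nat)
  moreover have "b - (s - 1) > 0" using s by simp
  ultimately have "Delta \<le> b - (s - 1)" by (rule dvd_imp_le)
  then show "Delta \<le> b - s + 1" using s by simp
qed

lemma fixed_total:
  assumes T: "T \<ge> 1" and D: "Delta \<ge> 1"
    and bd: "\<And>t. t \<in> {1..T} \<Longrightarrow> 0 \<le> v t \<and> v t \<le> 1 \<and> 0 \<le> m t \<and> m t \<le> 1"
    and VV: "Vseg m 1 T \<le> V"
  shows "fixed_regret T Delta v m \<le> (2 * ln (real T) + 2) * real T / real Delta
           + 2 * real Delta * V + 2 + (2 * ln (real T) + 2)"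
proof -
  define K where "K = 2 * ln (real T) + 2"
  have K0: "K \<ge> 0" unfolding K_def using T by simp
  define R where "R = fixed_restart Delta"
  define G where "G = (\<lambda>b. K * real b / real Delta + 2 * real Delta * Vseg m 1 b + 2 * real b / real T)"
  have Dpos: "real Delta > 0" using D by simp
  have Tpos: "real T > 0" using T by simp
  have key: "(\<Sum>t\<in>{s..b}. dd T R v m t) \<le> G b - G (s - 1) + (if Delta \<le> b - s + 1 then 0 else K)"
    if s: "1 \<le> s" "s \<le> b" "b \<le> T" "R s" "\<And>t. s < t \<Longrightarrow> t \<le> b \<Longrightarrow> \<not> R t" for s b
  proof -
    have bc: "(\<Sum>t\<in>{s..b}. dd T R v m t) \<le> K + 2 * (real (b - s) * (Vseg m s (b - 1) + 1 / real T))"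
      using batch_cost[OF T s(1,2,3), of R v m] s(4,5) bd unfolding K_def by auto
    have len: "b - s < Delta" using fixed_batch_len(1)[OF D s(1,2)] s(4,5) unfolding R_def by auto
    have r1: "real (s - 1) = real s - 1" using s by simp
    have r2: "real (b - s) = real b - real s" using s by simp
    have v1: "Vseg m s (b - 1) \<le> Vseg m s b" by (rule Vseg_mono) auto
    have v2: "Vseg m 1 (s - 1) + Vseg m s b \<le> Vseg m 1 b" using s by (intro Vseg_add) auto
    have "real (b - s) * Vseg m s (b - 1) \<le> real Delta * Vseg m s b"
      using len v1 by (intro mult_mono) (auto simp: Vseg_nonneg)
    then have A: "2 * (real (b - s) * Vseg m s (b - 1)) \<le> 2 * real Delta * (Vseg m 1 b - Vseg m 1 (s - 1))"
    proof -
      have "Vseg m s b \<le> Vseg m 1 b - Vseg m 1 (s - 1)" using v2 by linarith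
      then have "real Delta * Vseg m s b \<le> real Delta * (Vseg m 1 b - Vseg m 1 (s - 1))"
        using Dpos by (intro mult_left_mono) auto
      then show ?thesis using \<open>real (b - s) * Vseg m s (b - 1) \<le> real Delta * Vseg m s b\<close> by linarith
    qed
    have B: "2 * (real (b - s) * (1 / real T)) \<le> 2 * real b / real T - 2 * real (s - 1) / real T"
      using r1 r2 Tpos by (simp add: field_simps)
    define ex where "ex = (if Delta \<le> b - s + 1 then 0 else K)"
    have C: "K \<le> K * real b / real Delta - K * real (s - 1) / real Delta + ex"
    proof -
    have eq: "K * real b / real Delta - K * real (s - 1) / real Delta = K * (real b - real s + 1) / real Delta"
      using r1 by (simp add: diff_divide_distrib[symmetric] algebra_simps)
    show ?thesis
    proof (cases "Delta \<le> b - s + 1")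
      case True
      then have "real Delta \<le> real b - real s + 1" using s by linarith
      then have "K * real Delta \<le> K * (real b - real s + 1)" using K0 by (intro mult_left_mono) auto
      then have "K \<le> K * (real b - real s + 1) / real Delta" using Dpos by (simp add: field_simps)
      then show ?thesis using True eq unfolding ex_def by simp
    next
      case False
      have "0 \<le> K * (real b - real s + 1) / real Delta" using K0 s Dpos by simp
      then show ?thesis using False eq unfolding ex_def by simp
    qed
    qed
    have "G b - G (s - 1) = K * real b / real Delta - K * real (s - 1) / real Delta
       + 2 * real Delta * (Vseg m 1 b - Vseg m 1 (s - 1)) + (2 * real b / real T - 2 * real (s - 1) / real T)"
      unfolding G_def by (simp add: algebra_simps)
    moreover have "2 * (real (b - s) * (Vseg m s (b - 1) + 1 / real T)) = 2 * (real (b - s) * Vseg m s (b - 1)) + 2 * (real (b - s) * (1 / real T))"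
      by (simp add: algebra_simps)
    ultimately have "(\<Sum>t\<in>{s..b}. dd T R v m t) \<le> G b - G (s - 1) + ex" using bc A B C by linarith
    then show ?thesis unfolding ex_def .
  qed
  have "(\<Sum>t\<in>{1..T}. dd T R v m t) \<le> G T - G 0 + K"
  proof (rule assemble[OF T])
    show "R 1" unfolding R_def fixed_restart_def by simp
  next
    fix s b assume s: "1 \<le> s" "s \<le> b" "b < T" "R s" "\<And>t. s < t \<Longrightarrow> t \<le> b \<Longrightarrow> \<not> R t" "R (Suc b)"
    have "Delta \<le> b - s + 1" using fixed_batch_len(2)[OF D s(1,2)] s(4,5,6) unfolding R_def by auto
    then show "(\<Sum>t\<in>{s..b}. dd T R v m t) \<le> G b - G (s - 1)" using key[OF s(1,2) _ s(4,5)] s(3) by simp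
  next
    fix s assume s: "1 \<le> s" "s \<le> T" "R s" "\<And>t. s < t \<Longrightarrow> t \<le> T \<Longrightarrow> \<not> R t"
    show "(\<Sum>t\<in>{s..T}. dd T R v m t) \<le> G T - G (s - 1) + K"
    proof -
      have "(\<Sum>t\<in>{s..T}. dd T R v m t) \<le> G T - G (s - 1) + (if Delta \<le> T - s + 1 then 0 else K)"
        using key[OF s(1,2) _ s(3,4)] by simp
      moreover have "(if Delta \<le> T - s + 1 then 0 else K) \<le> K" using K0 by simp
      ultimately show ?thesis by linarith
    qed
  qed
  moreover have "G T \<le> K * real T / real Delta + 2 * real Delta * V + 2"
  proof -
    have "2 * real Delta * Vseg m 1 T \<le> 2 * real Delta * V" using VV Dpos by simp
    moreover have "2 * real T / real T = 2" using Tpos by simp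
    ultimately show ?thesis unfolding G_def by linarith
  qed
  moreover have "G 0 = 0" unfolding G_def Vseg_def by simp
  moreover have "fixed_regret T Delta v m = (\<Sum>t\<in>{1..T}. dd T R v m t)"
    unfolding fixed_regret_def prod_regret_def dd_def R_def by simp
  ultimately show ?thesis unfolding K_def by linarith
qed



lemma ar_Suc: "ar_state T c m (Suc n) =
  (if real (n + 1 - fst (ar_state T c m n) + 1)
        < sqrt (real T / (snd (ar_state T c m n) + Vseg m (fst (ar_state T c m n)) (n + 1) + c))
   then ar_state T c m n
   else (n + 2, snd (ar_state T c m n) + Vseg m (fst (ar_state T c m n)) (n + 1)))"
  by (cases "ar_state T c m n") (simp add: Vseg_def Let_def)

lemma ar_inv: "1 \<le> fst (ar_state T c m n) \<and> fst (ar_state T c m n) \<le> n + 1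
  \<and> 0 \<le> snd (ar_state T c m n) \<and> snd (ar_state T c m n) \<le> Vseg m 1 (fst (ar_state T c m n) - 1)"
proof (induction n)
  case 0 then show ?case by (simp add: Vseg_def)
next
  case (Suc n)
  define s where "s = fst (ar_state T c m n)"
  define W where "W = snd (ar_state T c m n)"
  have h: "1 \<le> s" "s \<le> n + 1" "0 \<le> W" "W \<le> Vseg m 1 (s - 1)" using Suc s_def W_def by auto
  have "Vseg m 1 (s - 1) + Vseg m s (n + 1) \<le> Vseg m 1 (n + 1)" using h by (intro Vseg_add) auto
  moreover have sp: "ar_state T c m n = (s, W)" by (simp add: s_def W_def)
  ultimately show ?case using h Vseg_nonneg[of m s "n+1"]
    unfolding ar_Suc[of T c m n] sp by auto
qed

definition HH :: "nat \<Rightarrow> real \<Rightarrow> (nat \<Rightarrow> real) \<Rightarrow> nat \<Rightarrow> real" where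
  "HH T c m n = snd (ar_state T c m n) + Vseg m (fst (ar_state T c m n)) n"

lemma HH_le: "HH T c m n \<le> Vseg m 1 n"
proof -
  have h: "1 \<le> fst (ar_state T c m n)" "fst (ar_state T c m n) \<le> Suc n"
     "snd (ar_state T c m n) \<le> Vseg m 1 (fst (ar_state T c m n) - 1)" using ar_inv[of T c m n] by auto
  show ?thesis unfolding HH_def using Vseg_add[OF h(1) h(2) h(1), of m] h(3) by auto
qed

lemma HH_nonneg: "0 \<le> HH T c m n"
  unfolding HH_def using ar_inv[of T c m n] Vseg_nonneg[of m] by (simp add: add_nonneg_nonneg)

lemma ar_const:
  assumes s: "1 \<le> s" and Rs: "ar_restart T c m s"
    and noR: "\<And>t. s < t \<Longrightarrow> t \<le> b \<Longrightarrow> \<not> ar_restart T c m t"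
  shows "s - 1 \<le> n \<Longrightarrow> n \<le> b - 1 \<Longrightarrow> ar_state T c m n = ar_state T c m (s - 1)"
proof (induction n)
  case 0 then show ?case by simp
next
  case (Suc n)
  show ?case
  proof (cases "Suc n = s - 1")
    case True then show ?thesis by simp
  next
    case False
    then have IH: "ar_state T c m n = ar_state T c m (s - 1)" using Suc by auto
    have fs: "fst (ar_state T c m (s - 1)) = s" using Rs unfolding ar_restart_def by simp
    have nR: "\<not> ar_restart T c m (n + 2)" using noR[of "n+2"] Suc.prems False by auto
    then have "fst (ar_state T c m (Suc n)) \<noteq> n + 2" unfolding ar_restart_def by simp
    then show ?thesis using ar_Suc[of T c m n] IH by (auto split: if_splits)
  qed
qed



lemma ar_batch_facts:
  assumes s: "1 \<le> s" "s \<le> b" and Rs: "ar_restart T c m s"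
    and noR: "\<And>t. s < t \<Longrightarrow> t \<le> b \<Longrightarrow> \<not> ar_restart T c m t"
  defines "W \<equiv> snd (ar_state T c m (s - 1))"
  shows "HH T c m b = W + Vseg m s b"
    and "HH T c m (s - 1) = W"
    and "s < b \<Longrightarrow> real (b - s) < sqrt (real T / (W + Vseg m s (b - 1) + c))"
    and "ar_restart T c m (Suc b) \<Longrightarrow> \<not> real (b - s + 1) < sqrt (real T / (W + Vseg m s b + c))"
proof -
  have fs: "fst (ar_state T c m (s - 1)) = s" using Rs unfolding ar_restart_def by simp
  have sp: "ar_state T c m (s - 1) = (s, W)" using fs unfolding W_def by (metis prod.collapse)
  have cst: "ar_state T c m n = (s, W)" if "s - 1 \<le> n" "n \<le> b - 1" for n
    using ar_const[OF s(1) Rs noR that] sp by simp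
  have b1: "ar_state T c m (b - 1) = (s, W)" using cst s by simp
  have bS: "Suc (b - 1) = b" using s by simp
  have stb: "ar_state T c m b = (if real (b - 1 + 1 - s + 1) < sqrt (real T / (W + Vseg m s (b - 1 + 1) + c))
     then (s, W) else (b - 1 + 2, W + Vseg m s (b - 1 + 1)))"
    using ar_Suc[of T c m "b - 1"] b1 bS by simp
  have e1: "b - 1 + 1 = b" "b - 1 + 2 = Suc b" "b - 1 + 1 - s + 1 = b - s + 1" using s by auto
  show "HH T c m b = W + Vseg m s b"
    unfolding HH_def stb e1 by (auto simp: Vseg_def)
  show "HH T c m (s - 1) = W" unfolding HH_def sp using Vseg_empty(1) by simp
  show "s < b \<Longrightarrow> real (b - s) < sqrt (real T / (W + Vseg m s (b - 1) + c))"
  proof -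
    assume sb: "s < b"
    have b2: "ar_state T c m (b - 2) = (s, W)" using cst sb s by simp
    have bS2: "Suc (b - 2) = b - 1" using sb s by simp
    have st1: "ar_state T c m (b - 1) = (if real (b - 2 + 1 - s + 1) < sqrt (real T / (W + Vseg m s (b - 2 + 1) + c))
     then (s, W) else (b - 2 + 2, W + Vseg m s (b - 2 + 1)))"
      using ar_Suc[of T c m "b - 2"] b2 bS2 by simp
    have e2: "b - 2 + 1 = b - 1" "b - 2 + 2 = b" "b - 2 + 1 - s + 1 = b - s" using sb s by auto
    show ?thesis using st1 b1 sb unfolding e2 by (auto split: if_splits)
  qed
  show "ar_restart T c m (Suc b) \<Longrightarrow> \<not> real (b - s + 1) < sqrt (real T / (W + Vseg m s b + c))"
  proof
    assume "ar_restart T c m (Suc b)" and lt: "real (b - s + 1) < sqrt (real T / (W + Vseg m s b + c))"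
    then have "fst (ar_state T c m b) = Suc b" unfolding ar_restart_def by simp
    moreover have "fst (ar_state T c m b) = s" using stb lt unfolding e1 by simp
    ultimately show False using s by simp
  qed
qed

lemma sqrt_tele:
  fixes X V' Vb D T :: real
  assumes X: "X > 0" and V: "0 \<le> V'" "V' \<le> Vb" and D: "0 \<le> D" "D \<le> sqrt (T / (X + V'))" and T: "T \<ge> 0"
  shows "D * V' \<le> 2 * sqrt T * (sqrt (X + Vb) - sqrt X)"
proof -
  define p where "p = sqrt (X + V')"
  define q where "q = sqrt X"
  have q0: "q > 0" unfolding q_def using X by simp
  have pq: "q \<le> p" unfolding p_def q_def using V by simp
  have p2: "p * p = X + V'" unfolding p_def using X V by simp
  have q2: "q * q = X" unfolding q_def using X by simp
  have p0: "p > 0" using pq q0 by simp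
  have "D * V' \<le> sqrt (T / (X + V')) * V'" using D V by (intro mult_right_mono) auto
  also have "\<dots> = sqrt T * (V' / p)" unfolding p_def by (simp add: real_sqrt_divide)
  also have "V' / p \<le> 2 * (p - q)"
  proof -
    have "V' = (p - q) * (p + q)" using p2 q2 by (simp add: algebra_simps)
    also have "\<dots> \<le> (p - q) * (2 * p)" using pq by (intro mult_left_mono) auto
    finally have "V' \<le> 2 * (p - q) * p" by (simp add: algebra_simps)
    then show ?thesis by (simp add: pos_divide_le_eq[OF p0])
  qed
  then have "sqrt T * (V' / p) \<le> sqrt T * (2 * (p - q))" using T by (intro mult_left_mono) auto
  also have "p \<le> sqrt (X + Vb)" unfolding p_def using V by simp
  then have "sqrt T * (2 * (p - q)) \<le> 2 * sqrt T * (sqrt (X + Vb) - sqrt X)"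
  proof -
    assume "p \<le> sqrt (X + Vb)"
    then have "2 * (p - q) \<le> 2 * (sqrt (X + Vb) - q)" by simp
    then have "sqrt T * (2 * (p - q)) \<le> sqrt T * (2 * (sqrt (X + Vb) - q))" using T by (intro mult_left_mono) auto
    then show ?thesis unfolding q_def by (simp add: algebra_simps)
  qed
  finally show ?thesis .
qed



lemma ar_total:
  assumes T: "T \<ge> 1"
    and bd: "\<And>t. t \<in> {1..T} \<Longrightarrow> 0 \<le> v t \<and> v t \<le> 1 \<and> 0 \<le> m t \<and> m t \<le> 1"
    and VV: "Vseg m 1 T \<le> V"
  shows "arprod_regret T v m \<le> 4 * sqrt (real T) * sqrt (V + 1 / real T) + 2
           + (2 * ln (real T) + 2) * real T / sqrt (real T / (V + 1 / real T)) + (2 * ln (real T) + 2)"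
proof -
  define K where "K = 2 * ln (real T) + 2"
  have K0: "K \<ge> 0" unfolding K_def using T by simp
  define c where "c = 1 / real T"
  have Tpos: "real T > 0" using T by simp
  have c0: "c > 0" unfolding c_def using Tpos by simp
  have V0: "V \<ge> 0" using VV Vseg_nonneg[of m 1 T] by linarith
  define L where "L = sqrt (real T / (V + c))"
  have L0: "L > 0" unfolding L_def using Tpos c0 V0 by simp
  define G where "G = (\<lambda>n. 4 * sqrt (real T) * sqrt (HH T c m n + c) + 2 * real n / real T + K * real n / L)"
  have key: "(\<Sum>t\<in>{s..b}. dd T (ar_restart T c m) v m t) \<le> G b - G (s - 1) + (if L \<le> real (b - s + 1) then 0 else K)"
    if s: "1 \<le> s" "s \<le> b" "b \<le> T" "ar_restart T c m s" "\<And>t. s < t \<Longrightarrow> t \<le> b \<Longrightarrow> \<not> ar_restart T c m t" for s b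
  proof -
    define ex where "ex = (if L \<le> real (b - s + 1) then 0 else K)"
    define W where "W = snd (ar_state T c m (s - 1))"
    have W0: "0 \<le> W" unfolding W_def using ar_inv[of T c m "s - 1"] by simp
    have fa1: "HH T c m b = W + Vseg m s b" unfolding W_def by (rule ar_batch_facts(1)) (use s in auto)
    have fa2: "HH T c m (s - 1) = W" unfolding W_def by (rule ar_batch_facts(2)) (use s in auto)
    have fa3: "real (b - s) < sqrt (real T / (W + Vseg m s (b - 1) + c))" if "s < b"
      unfolding W_def by (rule ar_batch_facts(3)) (use s that in auto)
    have bc: "(\<Sum>t\<in>{s..b}. dd T (ar_restart T c m) v m t) \<le> K + 2 * (real (b - s) * (Vseg m s (b - 1) + 1 / real T))"
      using batch_cost[OF T s(1,2,3), of "ar_restart T c m" v m] s(4,5) bd unfolding K_def by auto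
    have r1: "real (s - 1) = real s - 1" using s by simp
    have r2: "real (b - s) = real b - real s" using s by simp
    have A: "2 * (real (b - s) * Vseg m s (b - 1)) \<le> 4 * sqrt (real T) * (sqrt (HH T c m b + c) - sqrt (HH T c m (s - 1) + c))"
    proof (cases "s = b")
      case True
      have "sqrt (W + c) \<le> sqrt (W + Vseg m s b + c)" using Vseg_nonneg[of m s b] by simp
      then show ?thesis using True fa1 fa2 by simp
    next
      case False
      then have sb: "s < b" using s by simp
      have v1: "Vseg m s (b - 1) \<le> Vseg m s b" by (rule Vseg_mono) auto
      have "real (b - s) < sqrt (real T / (W + Vseg m s (b - 1) + c))" using fa3[OF sb] .
      then have "real (b - s) \<le> sqrt (real T / ((W + c) + Vseg m s (b - 1)))" by (simp add: add_ac)
      then have "real (b - s) * Vseg m s (b - 1) \<le> 2 * sqrt (real T) * (sqrt ((W + c) + Vseg m s b) - sqrt (W + c))"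
        using W0 c0 Vseg_nonneg[of m s "b - 1"] v1 by (intro sqrt_tele) auto
      then show ?thesis using fa1 fa2 by (simp add: add_ac)
    qed
    have B: "2 * (real (b - s) * (1 / real T)) \<le> 2 * real b / real T - 2 * real (s - 1) / real T"
      using r1 r2 Tpos by (simp add: field_simps)
    have C: "K \<le> K * real b / L - K * real (s - 1) / L + ex"
    proof -
      have eq: "K * real b / L - K * real (s - 1) / L = K * (real b - real s + 1) / L"
        using r1 by (simp add: diff_divide_distrib[symmetric] algebra_simps)
      show ?thesis
      proof (cases "L \<le> real (b - s + 1)")
        case True
        then have "L \<le> real b - real s + 1" using s by simp
        then have "K * L \<le> K * (real b - real s + 1)" using K0 by (intro mult_left_mono) auto
        then have "K \<le> K * (real b - real s + 1) / L" using L0 by (simp add: field_simps)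
        then show ?thesis using True eq unfolding ex_def by simp
      next
        case False
        have "0 \<le> K * (real b - real s + 1) / L" using K0 s L0 by simp
        then show ?thesis using False eq unfolding ex_def by simp
      qed
    qed
    have "G b - G (s - 1) = 4 * sqrt (real T) * (sqrt (HH T c m b + c) - sqrt (HH T c m (s - 1) + c))
       + (2 * real b / real T - 2 * real (s - 1) / real T) + (K * real b / L - K * real (s - 1) / L)"
      unfolding G_def by (simp add: algebra_simps)
    moreover have "2 * (real (b - s) * (Vseg m s (b - 1) + 1 / real T)) = 2 * (real (b - s) * Vseg m s (b - 1)) + 2 * (real (b - s) * (1 / real T))"
      by (simp add: algebra_simps)
    ultimately have "(\<Sum>t\<in>{s..b}. dd T (ar_restart T c m) v m t) \<le> G b - G (s - 1) + ex" using bc A B C by linarith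
    then show ?thesis unfolding ex_def .
  qed
  have "(\<Sum>t\<in>{1..T}. dd T (ar_restart T c m) v m t) \<le> G T - G 0 + K"
  proof (rule assemble[OF T])
    show "ar_restart T c m 1" unfolding ar_restart_def by simp
  next
    fix s b assume s: "1 \<le> s" "s \<le> b" "b < T" "ar_restart T c m s" "\<And>t. s < t \<Longrightarrow> t \<le> b \<Longrightarrow> \<not> ar_restart T c m t" "ar_restart T c m (Suc b)"
    define W where "W = snd (ar_state T c m (s - 1))"
    have fa1: "HH T c m b = W + Vseg m s b" unfolding W_def by (rule ar_batch_facts(1)) (use s in auto)
    have "\<not> real (b - s + 1) < sqrt (real T / (W + Vseg m s b + c))"
      unfolding W_def by (rule ar_batch_facts(4)) (use s in auto)
    then have ge: "sqrt (real T / (HH T c m b + c)) \<le> real (b - s + 1)" using fa1 by simp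
    have "HH T c m b \<le> V"
      using HH_le[of T c m b] Vseg_mono[of 1 1 b T m] VV s(3) by simp
    then have "real T / (V + c) \<le> real T / (HH T c m b + c)"
      using Tpos c0 HH_nonneg[of T c m b] by (intro divide_left_mono) auto
    then have "L \<le> sqrt (real T / (HH T c m b + c))" unfolding L_def by simp
    then have "L \<le> real (b - s + 1)" using ge by linarith
    then show "(\<Sum>t\<in>{s..b}. dd T (ar_restart T c m) v m t) \<le> G b - G (s - 1)" using key[OF s(1,2) _ s(4,5)] s(3) by simp
  next
    fix s assume s: "1 \<le> s" "s \<le> T" "ar_restart T c m s" "\<And>t. s < t \<Longrightarrow> t \<le> T \<Longrightarrow> \<not> ar_restart T c m t"
    show "(\<Sum>t\<in>{s..T}. dd T (ar_restart T c m) v m t) \<le> G T - G (s - 1) + K"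
    proof -
      have "(\<Sum>t\<in>{s..T}. dd T (ar_restart T c m) v m t) \<le> G T - G (s - 1) + (if L \<le> real (T - s + 1) then 0 else K)"
        using key[OF s(1,2) _ s(3,4)] by simp
      moreover have "(if L \<le> real (T - s + 1) then 0 else K) \<le> K" using K0 by simp
      ultimately show ?thesis by linarith
    qed
  qed
  moreover have "G T \<le> 4 * sqrt (real T) * sqrt (V + c) + 2 + K * real T / L"
  proof -
    have "HH T c m T \<le> V" using HH_le[of T c m T] VV by simp
    then have "sqrt (HH T c m T + c) \<le> sqrt (V + c)" by simp
    then have "4 * sqrt (real T) * sqrt (HH T c m T + c) \<le> 4 * sqrt (real T) * sqrt (V + c)"
      by (intro mult_left_mono) auto
    moreover have "2 * real T / real T = 2" using Tpos by simp
    ultimately show ?thesis unfolding G_def by linarith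
  qed
  moreover have "G 0 \<ge> 0" unfolding G_def using HH_nonneg[of T c m 0] c0 by simp
  moreover have "arprod_regret T v m = (\<Sum>t\<in>{1..T}. dd T (ar_restart T c m) v m t)"
    unfolding arprod_regret_def prod_regret_def dd_def c_def by simp
  ultimately show ?thesis unfolding K_def L_def c_def by linarith
qed



lemma ln_ge1: "real T \<ge> 3 \<Longrightarrow> ln (real T) \<ge> 1"
proof -
  assume "real T \<ge> 3"
  then have "exp 1 \<le> real T" using exp_le by linarith
  then have "ln (exp 1) \<le> ln (real T)" using \<open>real T \<ge> 3\<close> by (subst ln_le_cancel_iff) auto
  then show ?thesis by simp
qed

lemma sq_id: assumes "t > 0" "x > 0" shows "t / sqrt (t / x) = sqrt t * sqrt x"
proof -
  have "sqrt (t / x) = sqrt t / sqrt x" by (simp add: real_sqrt_divide)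
  moreover have "t = sqrt t * sqrt t" using assms by simp
  ultimately show ?thesis using assms by (simp add: field_simps)
qed

lemma ar_arith:
  fixes t V :: real
  assumes t: "t \<ge> 3" and V: "V \<ge> 0"
  shows "4 * sqrt t * sqrt (V + 1 / t) + 2 + (2 * ln t + 2) * t / sqrt (t / (V + 1 / t)) + (2 * ln t + 2)
         \<le> 30 * ln t ^ 1 * max (sqrt (t * V)) 1"
proof -
  define l where "l = ln t"
  define M where "M = max (sqrt (t * V)) 1"
  define q where "q = sqrt t * sqrt (V + 1 / t)"
  have l1: "l \<ge> 1"
  proof -
    have e: "exp 1 \<le> t" using t exp_le by linarith
    have "ln (exp 1) \<le> ln t" using e t by (subst ln_le_cancel_iff) auto
    then show ?thesis unfolding l_def by simp
  qed
  have M1: "M \<ge> 1" unfolding M_def by simp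
  have tq: "t / sqrt (t / (V + 1 / t)) = q" unfolding q_def
  proof (rule sq_id)
    show "t > 0" using t by simp
    have "1 / t > 0" using t by simp
    then show "V + 1 / t > 0" using V by linarith
  qed
  have q1: "q = sqrt (t * V + 1)" unfolding q_def using t by (simp add: real_sqrt_mult[symmetric] algebra_simps)
  have "q \<le> sqrt (t * V) + sqrt 1" unfolding q1 using t V by (intro sqrt_add_le_add_sqrt) auto
  then have q2: "q \<le> 2 * M" unfolding M_def by simp
  have "(2 * l + 2) * q \<le> (2 * l + 2) * (2 * M)" using q2 l1 by (intro mult_left_mono) auto
  then have f1: "2 * (l * q) + 2 * q \<le> 4 * (l * M) + 4 * M" by (simp add: algebra_simps)
  have f2: "l * M \<ge> M" using l1 M1 by (simp add: mult_le_cancel_right1)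
  have f3: "l * M \<ge> l" using l1 M1 by (simp add: mult_le_cancel_left1)
  have tq2: "(2 * l + 2) * t / sqrt (t / (V + 1 / t)) = (2 * l + 2) * q"
  proof -
    have "(2 * l + 2) * t / sqrt (t / (V + 1 / t)) = (2 * l + 2) * (t / sqrt (t / (V + 1 / t)))"
      by (rule times_divide_eq_right[symmetric])
    then show ?thesis using tq by simp
  qed
  have "4 * sqrt t * sqrt (V + 1 / t) + 2 + (2 * l + 2) * t / sqrt (t / (V + 1 / t)) + (2 * l + 2)
      = 6 * q + 2 * (l * q) + 2 * l + 4"
  proof -
    have "4 * sqrt t * sqrt (V + 1 / t) = 4 * q" unfolding q_def by simp
    moreover have "(2 * l + 2) * q = 2 * (l * q) + 2 * q" by (simp add: algebra_simps)
    ultimately show ?thesis unfolding tq2 by linarith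
  qed
  moreover have "30 * l ^ 1 * M = 30 * (l * M)" by simp
  ultimately show ?thesis unfolding l_def[symmetric] M_def[symmetric] using f1 f2 f3 q2 M1 l1 by linarith
qed

lemma fixed_arith:
  fixes t V D c1 c2 :: real
  assumes t: "t \<ge> 3" and V: "V > 0" and c: "c1 > 0" "c2 > 0"
    and D1: "c1 * sqrt (t / V) \<le> D" and D2: "D \<le> c2 * sqrt (t / V)"
  shows "(2 * ln t + 2) * t / D + 2 * D * V + 2 + (2 * ln t + 2)
         \<le> (4 / c1 + 2 * c2 + 6) * ln t ^ 1 * max (sqrt (t * V)) 1"
proof -
  define l where "l = ln t"
  define M where "M = max (sqrt (t * V)) 1"
  define g where "g = sqrt (t / V)"
  have l1: "l \<ge> 1"
  proof -
    have e: "exp 1 \<le> t" using t exp_le by linarith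
    have "ln (exp 1) \<le> ln t" using e t by (subst ln_le_cancel_iff) auto
    then show ?thesis unfolding l_def by simp
  qed
  have M1: "M \<ge> 1" unfolding M_def by simp
  have g0: "g > 0" unfolding g_def using t V by simp
  have D0: "D > 0" using D1 g0 c unfolding g_def by (smt (verit) mult_pos_pos)
  have tg: "t / g = sqrt (t * V)" unfolding g_def using t V by (simp add: sq_id real_sqrt_mult)
  have gV: "g * V = sqrt (t * V)"
  proof -
    have sv0: "sqrt V > 0" using V by simp
    have e1: "sqrt t * sqrt V * sqrt V = sqrt t * V" using V by (simp add: mult.assoc)
    have "g * V = sqrt t / sqrt V * V" unfolding g_def real_sqrt_divide by (rule refl)
    also have "\<dots> = sqrt t * sqrt V * sqrt V / sqrt V" by (simp only: e1 times_divide_eq_left)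
    also have "\<dots> = sqrt t * sqrt V" using sv0 by simp
    finally show ?thesis by (simp add: real_sqrt_mult)
  qed
  have sM: "sqrt (t * V) \<le> M" unfolding M_def by simp
  have a1: "t / D \<le> t / (c1 * g)" using D1 t c g0 D0 unfolding g_def[symmetric] by (intro divide_left_mono) auto
  have a2: "t / (c1 * g) = sqrt (t * V) / c1" using tg c g0 by (simp add: field_simps)
  have a3: "sqrt (t * V) / c1 \<le> M / c1" using sM c by (simp add: divide_right_mono)
  have A: "t / D \<le> M / c1" using a1 a2 a3 by linarith
  have A0: "t / D \<ge> 0" using t D0 by simp
  have "(2 * l + 2) * (t / D) \<le> (4 * l) * (M / c1)" using A A0 l1 by (intro mult_mono) auto
  then have P1: "(2 * l + 2) * t / D \<le> (4 / c1) * (l * M)" by (simp add: field_simps)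
  have "D * V \<le> c2 * g * V" using D2 V unfolding g_def[symmetric] by (intro mult_right_mono) auto
  also have "\<dots> = c2 * sqrt (t * V)" using gV by (simp add: mult.assoc)
  also have "\<dots> \<le> c2 * M" using sM c by (intro mult_left_mono) auto
  also have "\<dots> \<le> c2 * (l * M)" using c l1 M1 by (intro mult_left_mono) (auto simp: mult_le_cancel_right1)
  finally have P2: "2 * D * V \<le> 2 * c2 * (l * M)" by simp
  have f2: "l * M \<ge> M" using l1 M1 by (simp add: mult_le_cancel_right1)
  have f3: "l * M \<ge> l" using l1 M1 by (simp add: mult_le_cancel_left1)
  have R: "(4 / c1 + 2 * c2 + 6) * l ^ 1 * M = (4 / c1) * (l * M) + 2 * c2 * (l * M) + 6 * (l * M)"
    by (simp add: algebra_simps)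
  show ?thesis unfolding l_def[symmetric] M_def[symmetric] R using P1 P2 f2 f3 l1 M1 by linarith
qed



lemma seqs_ne: "V \<ge> 0 \<Longrightarrow> seqs T V \<noteq> {}"
proof -
  assume "V \<ge> 0"
  then have "((\<lambda>_. 0), (\<lambda>_. 0)) \<in> seqs T V" unfolding seqs_def by simp
  then show ?thesis by blast
qed

lemma seqs_props:
  assumes "(v, m) \<in> seqs T V"
  shows "\<And>t. t \<in> {1..T} \<Longrightarrow> 0 \<le> v t \<and> v t \<le> 1 \<and> 0 \<le> m t \<and> m t \<le> 1"
    and "Vseg m 1 T \<le> V"
proof -
  show "\<And>t. t \<in> {1..T} \<Longrightarrow> 0 \<le> v t \<and> v t \<le> 1 \<and> 0 \<le> m t \<and> m t \<le> 1"
    using assms unfolding seqs_def by auto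
  have "{1<..T} = {2..T}" by auto
  then show "Vseg m 1 T \<le> V" using assms unfolding seqs_def Vseg_def by auto
qed

theorem theorem1:
  fixes V :: "nat \<Rightarrow> real"
  assumes "\<And>T. V T \<ge> 0"
    and "V \<in> o(\<lambda>T. real T)"
  shows "(\<forall>Delta :: nat \<Rightarrow> nat.
            (\<forall>T. V T > 0) \<and> (\<forall>T. Delta T \<ge> 1)
            \<and> (\<lambda>T. real (Delta T)) \<in> \<Theta>(\<lambda>T. sqrt (real T / V T))
            \<longrightarrow> soft_bigO (\<lambda>T. SUP vm\<in>seqs T (V T). fixed_regret T (Delta T) (fst vm) (snd vm))
                          (\<lambda>T. max (sqrt (real T * V T)) 1))
       \<and> soft_bigO (\<lambda>T. SUP vm\<in>seqs T (V T). arprod_regret T (fst vm) (snd vm))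
                   (\<lambda>T. max (sqrt (real T * V T)) 1)"
proof (intro conjI allI impI)
  fix Delta :: "nat \<Rightarrow> nat"
  assume H: "(\<forall>T. V T > 0) \<and> (\<forall>T. Delta T \<ge> 1) \<and> (\<lambda>T. real (Delta T)) \<in> \<Theta>(\<lambda>T. sqrt (real T / V T))"
  then have Vp: "\<And>T. V T > 0" and Dp: "\<And>T. Delta T \<ge> 1"
    and Th: "(\<lambda>T. real (Delta T)) \<in> \<Theta>(\<lambda>T. sqrt (real T / V T))" by auto
  obtain c2 where c2: "c2 > 0" "eventually (\<lambda>T. norm (real (Delta T)) \<le> c2 * norm (sqrt (real T / V T))) at_top"
    using bigthetaD1[OF Th] by (elim landau_o.bigE) auto
  obtain c1 where c1: "c1 > 0" "eventually (\<lambda>T. c1 * norm (sqrt (real T / V T)) \<le> norm (real (Delta T))) at_top"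
    using bigthetaD2[OF Th] by (elim landau_omega.bigE) auto
  have sq0: "\<And>T. \<bar>sqrt (real T / V T)\<bar> = sqrt (real T / V T)"
    using Vp by (simp add: less_imp_le)
  have ev: "eventually (\<lambda>T. T \<ge> 3 \<and> real (Delta T) \<le> c2 * sqrt (real T / V T)
              \<and> c1 * sqrt (real T / V T) \<le> real (Delta T)) at_top"
    using eventually_conj[OF eventually_ge_at_top[of 3] eventually_conj[OF c2(2) c1(2)]]
    by (rule eventually_mono) (simp add: sq0)
  show "soft_bigO (\<lambda>T. SUP vm\<in>seqs T (V T). fixed_regret T (Delta T) (fst vm) (snd vm))
                          (\<lambda>T. max (sqrt (real T * V T)) 1)"
    unfolding soft_bigO_def
  proof (intro exI)
    show "eventually (\<lambda>T. (SUP vm\<in>seqs T (V T). fixed_regret T (Delta T) (fst vm) (snd vm))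
            \<le> (4 / c1 + 2 * c2 + 6) * ln (real T) ^ 1 * max (sqrt (real T * V T)) 1) at_top"
      using ev
    proof (rule eventually_mono)
      fix T :: nat
      assume T: "T \<ge> 3 \<and> real (Delta T) \<le> c2 * sqrt (real T / V T)
              \<and> c1 * sqrt (real T / V T) \<le> real (Delta T)"
      show "(SUP vm\<in>seqs T (V T). fixed_regret T (Delta T) (fst vm) (snd vm))
            \<le> (4 / c1 + 2 * c2 + 6) * ln (real T) ^ 1 * max (sqrt (real T * V T)) 1"
      proof (rule cSUP_least)
        show "seqs T (V T) \<noteq> {}" using assms(1) by (rule seqs_ne)
      next
        fix vm assume vm: "vm \<in> seqs T (V T)"
        obtain v m where vmd: "vm = (v, m)" by (cases vm)
        note sp = seqs_props[OF vm[unfolded vmd]]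
        have "fixed_regret T (Delta T) v m \<le> (2 * ln (real T) + 2) * real T / real (Delta T)
           + 2 * real (Delta T) * V T + 2 + (2 * ln (real T) + 2)"
          using T Dp[of T] by (intro fixed_total sp) auto
        also have "\<dots> \<le> (4 / c1 + 2 * c2 + 6) * ln (real T) ^ 1 * max (sqrt (real T * V T)) 1"
          using T Vp[of T] c1(1) c2(1) by (intro fixed_arith) auto
        finally show "fixed_regret T (Delta T) (fst vm) (snd vm)
            \<le> (4 / c1 + 2 * c2 + 6) * ln (real T) ^ 1 * max (sqrt (real T * V T)) 1"
          using vmd by simp
      qed
    qed
  qed
next
  show "soft_bigO (\<lambda>T. SUP vm\<in>seqs T (V T). arprod_regret T (fst vm) (snd vm))
                   (\<lambda>T. max (sqrt (real T * V T)) 1)"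
    unfolding soft_bigO_def
  proof (intro exI)
    show "eventually (\<lambda>T. (SUP vm\<in>seqs T (V T). arprod_regret T (fst vm) (snd vm))
            \<le> 30 * ln (real T) ^ 1 * max (sqrt (real T * V T)) 1) at_top"
      using eventually_ge_at_top[of "3::nat"]
    proof (rule eventually_mono)
      fix T :: nat
      assume T: "T \<ge> 3"
      show "(SUP vm\<in>seqs T (V T). arprod_regret T (fst vm) (snd vm))
            \<le> 30 * ln (real T) ^ 1 * max (sqrt (real T * V T)) 1"
      proof (rule cSUP_least)
        show "seqs T (V T) \<noteq> {}" using assms(1) by (rule seqs_ne)
      next
        fix vm assume vm: "vm \<in> seqs T (V T)"
        obtain v m where vmd: "vm = (v, m)" by (cases vm)
        note sp = seqs_props[OF vm[unfolded vmd]]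
        have "arprod_regret T v m \<le> 4 * sqrt (real T) * sqrt (V T + 1 / real T) + 2
           + (2 * ln (real T) + 2) * real T / sqrt (real T / (V T + 1 / real T)) + (2 * ln (real T) + 2)"
          using T by (intro ar_total sp) auto
        also have "\<dots> \<le> 30 * ln (real T) ^ 1 * max (sqrt (real T * V T)) 1"
          using T assms(1)[of T] by (intro ar_arith) auto
        finally show "arprod_regret T (fst vm) (snd vm) \<le> 30 * ln (real T) ^ 1 * max (sqrt (real T * V T)) 1"
          using vmd by simp
      qed
    qed
  qed
qed

end
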